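(* Let $n$ be a positive integer and $\pi\in S(\mathbb{Z}_n)$. Then $x\mapsto\pi(x)+x$ is a permutation of $\mathbb{Z}_n$ if and only if for no $k\in\mathbb{Z}_n$ does the cycle decomposition of $x\mapsto\pi(x+k)$ contain a cycle of length $2$.
   Context: $S(\mathbb{Z}_n)$ denotes the set of bijections $\mathbb{Z}_n\to\mathbb{Z}_n$. *)

theory Defs
  imports Main
begin

text \<open>Z_n is modelled by the carrier {..<n} of naturals with addition mod n.
  A permutation sigma of a set A has a cycle of length 2 in its cycle decomposition
  iff some element x of A satisfies sigma x \<noteq> x and sigma (sigma x) = x.\<close>

definition has_2cycle :: "(nat \<Rightarrow> nat) \<Rightarrow> nat set \<Rightarrow> bool" where
  "has_2cycle \<sigma> A \<longleftrightarrow> (\<exists>x\<in>A. \<sigma> x \<noteq> x \<and> \<sigma> (\<sigma> x) = x)"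

end

theory Submission
  imports Defs
begin

lemma fin_bij: "(\<And>x. x < n \<Longrightarrow> (f x::nat) < n) \<Longrightarrow> bij_betw f {..<n} {..<n} \<longleftrightarrow> inj_on f {..<n}"
  by (metis bij_betw_def endo_inj_surj finite_lessThan image_subsetI lessThan_iff)

theorem lemma2p5:
  fixes n :: nat and \<pi> :: "nat \<Rightarrow> nat"
  assumes "n > 0"
    and "bij_betw \<pi> {..<n} {..<n}"
  shows "bij_betw (\<lambda>x. (\<pi> x + x) mod n) {..<n} {..<n} \<longleftrightarrow>
         (\<forall>k\<in>{..<n}. \<not> has_2cycle (\<lambda>x. \<pi> ((x + k) mod n)) {..<n})"
proof -
  have pin: "\<And>x. x < n \<Longrightarrow> \<pi> x < n" using assms(2) by (auto simp: bij_betw_def)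
  have pinj: "inj_on \<pi> {..<n}" using assms(2) by (auto simp: bij_betw_def)
  have eq: "bij_betw (\<lambda>x. (\<pi> x + x) mod n) {..<n} {..<n} \<longleftrightarrow> inj_on (\<lambda>x. (\<pi> x + x) mod n) {..<n}"
    by (rule fin_bij) (simp add: assms(1))
  show ?thesis unfolding eq
  proof
    assume inj: "inj_on (\<lambda>x. (\<pi> x + x) mod n) {..<n}"
    show "\<forall>k\<in>{..<n}. \<not> has_2cycle (\<lambda>x. \<pi> ((x + k) mod n)) {..<n}"
    proof (intro ballI notI)
      fix k assume k: "k \<in> {..<n}"
      assume "has_2cycle (\<lambda>x. \<pi> ((x + k) mod n)) {..<n}"
      then obtain z where z: "z < n" "\<pi> ((z + k) mod n) \<noteq> z"
        "\<pi> ((\<pi> ((z + k) mod n) + k) mod n) = z" by (auto simp: has_2cycle_def)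
      define x where "x = (z + k) mod n"
      define b where "b = \<pi> x"
      define y where "y = (b + k) mod n"
      have xn: "x < n" "y < n" using assms(1) by (auto simp: x_def y_def)
      have py: "\<pi> y = z" using z(3) by (simp add: y_def b_def x_def)
      have bz: "b \<noteq> z" using z(2) by (simp add: b_def x_def)
      have xy: "x \<noteq> y" using py bz b_def by auto
      have "(\<pi> x + x) mod n = (b + (z + k)) mod n" by (simp add: b_def x_def mod_add_right_eq)
      also have "\<dots> = (z + ((b + k))) mod n" by (simp add: algebra_simps)
      also have "\<dots> = (\<pi> y + y) mod n" unfolding py by (simp add: y_def mod_add_right_eq)
      finally have "(\<pi> x + x) mod n = (\<pi> y + y) mod n" .
      with inj xn xy show False by (auto dest: inj_onD)
    qed
  next
    assume no: "\<forall>k\<in>{..<n}. \<not> has_2cycle (\<lambda>x. \<pi> ((x + k) mod n)) {..<n}"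
    show "inj_on (\<lambda>x. (\<pi> x + x) mod n) {..<n}"
    proof (rule inj_onI, rule ccontr)
      fix x y assume x: "x \<in> {..<n}" and y: "y \<in> {..<n}" and
        e: "(\<pi> x + x) mod n = (\<pi> y + y) mod n" and xy: "x \<noteq> y"
      have xn: "x < n" "y < n" using x y by auto
      define k where "k = (y + n - \<pi> x) mod n"
      have kn: "k < n" using assms(1) by (simp add: k_def)
      have pxn: "\<pi> x < n" "\<pi> y < n" using pin xn by auto
      have pne: "\<pi> x \<noteq> \<pi> y" using pinj xn xy by (auto dest: inj_onD)
      have h1: "(\<pi> y + k) mod n = x"
      proof -
        have "(\<pi> y + k) mod n = (\<pi> y + (y + n - \<pi> x)) mod n" by (simp add: k_def mod_add_right_eq)
        also have "\<dots> = ((\<pi> y + y) + n - \<pi> x) mod n" using pxn by (simp add: add.assoc)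
        finally have a: "(\<pi> y + k) mod n = ((\<pi> y + y) + n - \<pi> x) mod n" .
        have "int (((\<pi> y + y) + n - \<pi> x) mod n) = (int (\<pi> y + y) + int n - int (\<pi> x)) mod int n"
          using pxn by (simp add: zmod_int of_nat_diff)
        also have "\<dots> = (int (\<pi> x + x) + int n - int (\<pi> x)) mod int n"
        proof -
          have "int (\<pi> y + y) mod int n = int (\<pi> x + x) mod int n" using e by (metis of_nat_mod)
          then show ?thesis by (metis mod_diff_left_eq mod_add_left_eq)
        qed
        also have "\<dots> = int x" using xn by simp
        finally show ?thesis using a by linarith
      qed
      have h2: "(\<pi> x + k) mod n = y"
      proof -
        have "(\<pi> x + k) mod n = (\<pi> x + (y + n - \<pi> x)) mod n" by (simp add: k_def mod_add_right_eq)
        also have "\<dots> = (y + n) mod n" using pxn by simp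
        finally show ?thesis using xn by simp
      qed
      have "has_2cycle (\<lambda>x. \<pi> ((x + k) mod n)) {..<n}"
        unfolding has_2cycle_def
        by (rule bexI[of _ "\<pi> y"]) (use h1 h2 pne pxn in auto)
      with no kn show False by auto
    qed
  qed
qed

end
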